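(* Let $M:\alpha\mapsto M_\alpha$ be a matroid flock on a finite set $E$, and let $\alpha,\beta\in\mathbb{Z}^E$. If $M_\alpha=M_\beta$, then there is a walk $\gamma^0,\ldots,\gamma^k\in\mathbb{Z}^E$ from $\alpha=\gamma^0$ to $\beta=\gamma^k$ such that $M_{\gamma^i}=M_\alpha$ for $i=0,\ldots,k$, and for each $i\in\{1,\ldots,k\}$ there is a set $J_i\subseteq E$ with $\gamma^i-\gamma^{i-1}=\pm e_{J_i}$.
   Context: $e_J:=\sum_{i\in J}e_i$ ($e_i$ unit vectors), $\mathbf{1}:=e_E$. A matroid flock of rank $d$ on $E$ is a map $M$ assigning to each $\alpha\in\mathbb{Z}^E$ a matroid $M_\alpha$ on $E$ of rank $d$ with (MF1) $M_\alpha/i=M_{\alpha+e_i}\setminus i$ for all $\alpha\in\mathbb{Z}^E$, $i\in E$ (contraction, deletion); and (MF2) $M_\alpha=M_{\alpha+\mathbf{1}}$ for all $\alpha$. *)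

theory Defs
  imports Main "HOL-Library.Function_Algebras"
begin

definition matroid :: "'a set \<Rightarrow> 'a set set \<Rightarrow> bool" where
  "matroid E \<I> \<longleftrightarrow> finite E \<and> (\<forall>X\<in>\<I>. X \<subseteq> E) \<and> {} \<in> \<I>
     \<and> (\<forall>X Y. X \<in> \<I> \<and> Y \<subseteq> X \<longrightarrow> Y \<in> \<I>)
     \<and> (\<forall>X Y. X \<in> \<I> \<and> Y \<in> \<I> \<and> card X < card Y \<longrightarrow> (\<exists>y\<in>Y - X. insert y X \<in> \<I>))"

definition matroid_rank :: "'a set set \<Rightarrow> nat \<Rightarrow> bool" where
  "matroid_rank \<I> d \<longleftrightarrow> (\<exists>X\<in>\<I>. card X = d) \<and> (\<forall>X\<in>\<I>. card X \<le> d)"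

definition mdelete :: "'a set set \<Rightarrow> 'a \<Rightarrow> 'a set set" where
  "mdelete \<I> i = {X \<in> \<I>. i \<notin> X}"

definition mcontract :: "'a set set \<Rightarrow> 'a \<Rightarrow> 'a set set" where
  "mcontract \<I> i = (if {i} \<in> \<I> then {X. i \<notin> X \<and> insert i X \<in> \<I>} else {X \<in> \<I>. i \<notin> X})"

definition ZE :: "'a set \<Rightarrow> ('a \<Rightarrow> int) set" where
  "ZE E = {\<alpha>. \<forall>x. x \<notin> E \<longrightarrow> \<alpha> x = 0}"

definition eJ :: "'a set \<Rightarrow> 'a \<Rightarrow> int" where
  "eJ J = (\<lambda>x. if x \<in> J then 1 else 0)"

definition matroid_flock :: "'a set \<Rightarrow> nat \<Rightarrow> (('a \<Rightarrow> int) \<Rightarrow> 'a set set) \<Rightarrow> bool" where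
  "matroid_flock E d M \<longleftrightarrow>
     (\<forall>\<alpha>\<in>ZE E. matroid E (M \<alpha>) \<and> matroid_rank (M \<alpha>) d)
   \<and> (\<forall>\<alpha>\<in>ZE E. \<forall>i\<in>E. mcontract (M \<alpha>) i = mdelete (M (\<alpha> + eJ {i})) i)
   \<and> (\<forall>\<alpha>\<in>ZE E. M \<alpha> = M (\<alpha> + eJ E))"

end

theory Submission
  imports Defs
begin


definition rk :: "'a set set \<Rightarrow> 'a set \<Rightarrow> nat" where
  "rk I X = Max (card ` {Y \<in> I. Y \<subseteq> X})"

lemma m_fin: "matroid E I \<Longrightarrow> finite I"
  unfolding matroid_def by (meson Pow_iff finite_Pow_iff finite_subset subsetI)

lemma m_indep_fin: "matroid E I \<Longrightarrow> Y \<in> I \<Longrightarrow> finite Y"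
  unfolding matroid_def by (meson finite_subset)

lemma m_sub: "matroid E I \<Longrightarrow> Y \<in> I \<Longrightarrow> Z \<subseteq> Y \<Longrightarrow> Z \<in> I"
  unfolding matroid_def by blast

lemma m_inE: "matroid E I \<Longrightarrow> Y \<in> I \<Longrightarrow> Y \<subseteq> E"
  unfolding matroid_def by blast

lemma m_empty: "matroid E I \<Longrightarrow> {} \<in> I"
  unfolding matroid_def by blast

lemma m_aug: "matroid E I \<Longrightarrow> X \<in> I \<Longrightarrow> Y \<in> I \<Longrightarrow> card X < card Y \<Longrightarrow> \<exists>y\<in>Y - X. insert y X \<in> I"
  unfolding matroid_def by blast

lemma rk_ge: assumes "matroid E I" "Y \<in> I" "Y \<subseteq> X" shows "card Y \<le> rk I X"
proof -
  have "finite {Y \<in> I. Y \<subseteq> X}" using m_fin[OF assms(1)] by simp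
  then show ?thesis unfolding rk_def using assms(2,3) by (intro Max_ge) auto
qed

lemma rk_ex: assumes "matroid E I" shows "\<exists>Y\<in>I. Y \<subseteq> X \<and> card Y = rk I X"
proof -
  have f: "finite {Y \<in> I. Y \<subseteq> X}" using m_fin[OF assms(1)] by simp
  have "{} \<in> {Y \<in> I. Y \<subseteq> X}" using m_empty[OF assms] by simp
  then have "rk I X \<in> card ` {Y \<in> I. Y \<subseteq> X}" unfolding rk_def using f
    by (intro Max_in) auto
  then show ?thesis by auto
qed

lemma rk_mono: assumes "matroid E I" "X \<subseteq> X'" shows "rk I X \<le> rk I X'"
  using rk_ex[OF assms(1), of X] rk_ge[OF assms(1)] assms(2) by (metis order_trans)

lemma rk_le_card: assumes "matroid E I" "finite X" shows "rk I X \<le> card X"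
  using rk_ex[OF assms(1), of X] assms(2) by (metis card_mono)

lemma rk_augment_n: assumes "matroid E I"
  shows "\<forall>Y. Y \<in> I \<longrightarrow> Y \<subseteq> X \<longrightarrow> rk I X - card Y = n \<longrightarrow> (\<exists>Z\<in>I. Y \<subseteq> Z \<and> Z \<subseteq> X \<and> card Z = rk I X)"
proof (induction n)
  case 0
  then show ?case using rk_ge[OF assms] by (metis diff_is_0_eq le_antisym order_refl)
next
  case (Suc n)
  show ?case
  proof (intro allI impI)
    fix Y assume Y: "Y \<in> I" "Y \<subseteq> X" "rk I X - card Y = Suc n"
    obtain W where W: "W \<in> I" "W \<subseteq> X" "card W = rk I X" using rk_ex[OF assms] by blast
    have "card Y < card W" using Y W by simp
    then obtain y where y: "y \<in> W - Y" "insert y Y \<in> I" using m_aug[OF assms Y(1) W(1)] by blast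
    have fY: "finite Y" using m_indep_fin[OF assms Y(1)] .
    have c: "card (insert y Y) = Suc (card Y)" using y fY by simp
    have "insert y Y \<subseteq> X" using y W Y by blast
    moreover have "rk I X - card (insert y Y) = n" using c Y by simp
    ultimately obtain Z where "Z \<in> I" "insert y Y \<subseteq> Z" "Z \<subseteq> X" "card Z = rk I X"
      using Suc.IH y by blast
    then show "\<exists>Z\<in>I. Y \<subseteq> Z \<and> Z \<subseteq> X \<and> card Z = rk I X" by blast
  qed
qed

lemma rk_augment: assumes "matroid E I" "Y \<in> I" "Y \<subseteq> X"
  shows "\<exists>Z\<in>I. Y \<subseteq> Z \<and> Z \<subseteq> X \<and> card Z = rk I X"
  using rk_augment_n[OF assms(1)] assms(2,3) by blast

lemma rk_subadd: assumes "matroid E I" shows "rk I (A \<union> B) \<le> rk I A + rk I B"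
proof -
  obtain Y where Y: "Y \<in> I" "Y \<subseteq> A \<union> B" "card Y = rk I (A \<union> B)" using rk_ex[OF assms] by blast
  have fY: "finite Y" using m_indep_fin[OF assms Y(1)] .
  have "Y = (Y \<inter> A) \<union> (Y \<inter> B)" using Y by blast
  then have "card Y \<le> card (Y \<inter> A) + card (Y \<inter> B)" by (metis card_Un_le)
  moreover have "card (Y \<inter> A) \<le> rk I A" using rk_ge[OF assms m_sub[OF assms Y(1)]] by blast
  moreover have "card (Y \<inter> B) \<le> rk I B" using rk_ge[OF assms m_sub[OF assms Y(1)]] by blast
  ultimately show ?thesis using Y by simp
qed

lemma rk_submod: assumes "matroid E I" shows "rk I (A \<union> B) + rk I (A \<inter> B) \<le> rk I A + rk I B"
proof -
  obtain Y where Y: "Y \<in> I" "Y \<subseteq> A \<inter> B" "card Y = rk I (A \<inter> B)" using rk_ex[OF assms] by blast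
  obtain Z where Z: "Z \<in> I" "Y \<subseteq> Z" "Z \<subseteq> A \<union> B" "card Z = rk I (A \<union> B)"
    using rk_augment[OF assms Y(1)] Y(2) by blast
  have fZ: "finite Z" using m_indep_fin[OF assms Z(1)] .
  have e1: "(Z \<inter> A) \<union> (Z \<inter> B) = Z" using Z by blast
  have "card (Z \<inter> A) + card (Z \<inter> B) = card ((Z \<inter> A) \<union> (Z \<inter> B)) + card ((Z \<inter> A) \<inter> (Z \<inter> B))"
    using fZ by (intro card_Un_Int) auto
  moreover have "card Y \<le> card ((Z \<inter> A) \<inter> (Z \<inter> B))" using Y Z fZ by (intro card_mono) auto
  moreover have "card (Z \<inter> A) \<le> rk I A" using rk_ge[OF assms m_sub[OF assms Z(1)]] by blast
  moreover have "card (Z \<inter> B) \<le> rk I B" using rk_ge[OF assms m_sub[OF assms Z(1)]] by blast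
  ultimately show ?thesis using Y Z e1 by simp
qed

lemma rk_single: assumes "matroid E I" shows "rk I {i} \<le> 1"
  using rk_le_card[OF assms, of "{i}"] by simp

lemma rk_E: assumes "matroid E I" "matroid_rank I d" shows "rk I E = d"
proof -
  obtain X where "X \<in> I" "card X = d" using assms(2) unfolding matroid_rank_def by blast
  then have "d \<le> rk I E" using rk_ge[OF assms(1)] m_inE[OF assms(1)] by metis
  moreover obtain Y where "Y \<in> I" "card Y = rk I E" using rk_ex[OF assms(1)] by blast
  then have "rk I E \<le> d" using assms(2) unfolding matroid_rank_def by metis
  ultimately show ?thesis by simp
qed

lemma rk_eq_by: assumes "matroid E I1" "matroid E I2" "\<And>X. X \<subseteq> E \<Longrightarrow> rk I1 X = rk I2 X"
  shows "I1 = I2"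
proof -
  have *: "Y \<in> J2" if m1: "matroid E J1" and m2: "matroid E J2" and eq: "\<And>X. X \<subseteq> E \<Longrightarrow> rk J1 X = rk J2 X"
     and Y: "Y \<in> J1" for J1 J2 Y
  proof -
    have YE: "Y \<subseteq> E" using m_inE[OF m1 Y] .
    have fY: "finite Y" using m_indep_fin[OF m1 Y] .
    have "card Y \<le> rk J1 Y" using rk_ge[OF m1 Y] by simp
    then have "card Y \<le> rk J2 Y" using eq[OF YE] by simp
    obtain Z where Z: "Z \<in> J2" "Z \<subseteq> Y" "card Z = rk J2 Y" using rk_ex[OF m2] by blast
    have "rk J2 Y \<le> card Y" using rk_le_card[OF m2 fY] .
    then have "Z = Y" using Z fY \<open>card Y \<le> rk J2 Y\<close> by (metis card_subset_eq le_antisym)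
    then show ?thesis using Z by simp
  qed
  show ?thesis using *[OF assms(1,2) assms(3)] *[OF assms(2,1)] assms(3) by (metis subsetI subset_antisym)
qed

lemma rk_sep: assumes m: "matroid E I" and J: "J \<subseteq> E" and s: "rk I J + rk I (E - J) \<le> rk I E"
  and Y: "Y \<subseteq> J" and Z: "Z \<subseteq> E - J"
  shows "rk I (Y \<union> Z) = rk I Y + rk I Z"
proof -
  have "rk I ((Y \<union> (E - J)) \<union> J) + rk I ((Y \<union> (E - J)) \<inter> J) \<le> rk I (Y \<union> (E - J)) + rk I J"
    using rk_submod[OF m] .
  moreover have "(Y \<union> (E - J)) \<union> J = E" using J Y by blast
  moreover have "(Y \<union> (E - J)) \<inter> J = Y" using Y by blast
  ultimately have 1: "rk I E + rk I Y \<le> rk I (Y \<union> (E - J)) + rk I J" by simp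
  have "rk I ((Y \<union> Z) \<union> (E - J)) + rk I ((Y \<union> Z) \<inter> (E - J)) \<le> rk I (Y \<union> Z) + rk I (E - J)"
    using rk_submod[OF m] .
  moreover have "(Y \<union> Z) \<union> (E - J) = Y \<union> (E - J)" using Z by blast
  moreover have "(Y \<union> Z) \<inter> (E - J) = Z" using Y Z by blast
  ultimately have 2: "rk I (Y \<union> (E - J)) + rk I Z \<le> rk I (Y \<union> Z) + rk I (E - J)" by simp
  have 3: "rk I (Y \<union> Z) \<le> rk I Y + rk I Z" using rk_subadd[OF m] .
  show ?thesis using 1 2 3 s by linarith
qed

lemma rk_coloop: assumes m: "matroid E I" and i: "i \<in> A" and c: "rk I (E - {i}) < rk I E"
  shows "rk I A = Suc (rk I (A - {i}))"
proof -
  obtain Y where Y: "Y \<in> I" "Y \<subseteq> A - {i}" "card Y = rk I (A - {i})" using rk_ex[OF m] by blast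
  obtain Z where Z: "Z \<in> I" "Y \<subseteq> Z" "Z \<subseteq> E" "card Z = rk I E"
    using rk_augment[OF m Y(1) m_inE[OF m Y(1)]] by blast
  have "i \<in> Z"
  proof (rule ccontr)
    assume "i \<notin> Z" then have "Z \<subseteq> E - {i}" using Z by blast
    then have "card Z \<le> rk I (E - {i})" using rk_ge[OF m Z(1)] by simp
    then show False using Z c by simp
  qed
  then have "insert i Y \<in> I" using m_sub[OF m Z(1)] Z by blast
  moreover have "insert i Y \<subseteq> A" using Y i by blast
  ultimately have "card (insert i Y) \<le> rk I A" using rk_ge[OF m] by blast
  moreover have "i \<notin> Y" using Y by blast
  then have "card (insert i Y) = Suc (card Y)" using m_indep_fin[OF m Y(1)] by simp
  ultimately have ge: "Suc (rk I (A - {i})) \<le> rk I A" using Y by simp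
  have "A = (A - {i}) \<union> {i}" using i by blast
  then have "rk I A \<le> rk I (A - {i}) + rk I {i}" using rk_subadd[OF m] by metis
  then show ?thesis using ge rk_single[OF m, of i] by simp
qed

lemma rk_delete: "i \<notin> X \<Longrightarrow> rk (mdelete I i) X = rk I X"
proof -
  assume "i \<notin> X"
  then have "{Y \<in> mdelete I i. Y \<subseteq> X} = {Y \<in> I. Y \<subseteq> X}" unfolding mdelete_def by blast
  then show ?thesis unfolding rk_def by simp
qed

lemma rk_contract: assumes m: "matroid E I" and iX: "i \<notin> X"
  shows "rk (mcontract I i) X + rk I {i} = rk I (insert i X)"
proof (cases "{i} \<in> I")
  case True
  have r1: "rk I {i} = 1" using rk_ge[OF m True, of "{i}"] rk_single[OF m, of i] by simp
  let ?S = "{Y \<in> mcontract I i. Y \<subseteq> X}"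
  have Sdef: "?S = {Y. i \<notin> Y \<and> insert i Y \<in> I \<and> Y \<subseteq> X}" using True unfolding mcontract_def by auto
  have "?S \<subseteq> (\<lambda>Y. Y - {i}) ` I"
  proof
    fix Y assume "Y \<in> ?S"
    then have "i \<notin> Y" "insert i Y \<in> I" using Sdef by auto
    then show "Y \<in> (\<lambda>Y. Y - {i}) ` I" by (intro image_eqI[of _ _ "insert i Y"]) auto
  qed
  then have fS: "finite ?S" using m_fin[OF m] by (meson finite_imageI finite_subset)
  obtain Z where Z: "Z \<in> I" "{i} \<subseteq> Z" "Z \<subseteq> insert i X" "card Z = rk I (insert i X)"
    using rk_augment[OF m True, of "insert i X"] by blast
  have fZ: "finite Z" using m_indep_fin[OF m Z(1)] .
  have ZS: "Z - {i} \<in> ?S" using Z Sdef by (simp add: insert_absorb) blast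
  have cZ: "card (Z - {i}) = rk I (insert i X) - 1" using Z fZ by simp
  have "Max (card ` ?S) = rk I (insert i X) - 1"
  proof (rule Max_eqI)
    show "finite (card ` ?S)" using fS by simp
    show "rk I (insert i X) - 1 \<in> card ` ?S" using ZS cZ by (metis image_eqI)
    fix y assume "y \<in> card ` ?S"
    then obtain Y where Y: "Y \<in> ?S" "y = card Y" by blast
    have "i \<notin> Y" "insert i Y \<in> I" "Y \<subseteq> X" using Y Sdef by auto
    then have "card (insert i Y) \<le> rk I (insert i X)" using rk_ge[OF m] by blast
    moreover have "card (insert i Y) = Suc (card Y)" using \<open>i \<notin> Y\<close> m_indep_fin[OF m \<open>insert i Y \<in> I\<close>] by simp
    ultimately show "y \<le> rk I (insert i X) - 1" using Y by simp
  qed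
  moreover have "1 \<le> rk I (insert i X)" using rk_ge[OF m True, of "insert i X"] by simp
  ultimately show ?thesis using r1 unfolding rk_def[of "mcontract I i"] by simp
next
  case False
  have r0: "rk I {i} = 0"
  proof -
    obtain Y where Y: "Y \<in> I" "Y \<subseteq> {i}" "card Y = rk I {i}" using rk_ex[OF m] by blast
    then have "Y = {}" using False by (metis subset_singletonD)
    then show ?thesis using Y by simp
  qed
  have "mcontract I i = mdelete I i" using False unfolding mcontract_def mdelete_def by simp
  then have 1: "rk (mcontract I i) X = rk I X" using rk_delete[OF iX] by simp
  obtain Y where Y: "Y \<in> I" "Y \<subseteq> insert i X" "card Y = rk I (insert i X)" using rk_ex[OF m] by blast
  have "i \<notin> Y" using m_sub[OF m Y(1), of "{i}"] False by blast
  then have "Y \<subseteq> X" using Y by blast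
  then have "rk I (insert i X) \<le> rk I X" using rk_ge[OF m Y(1)] Y by simp
  moreover have "rk I X \<le> rk I (insert i X)" using rk_mono[OF m] by blast
  ultimately show ?thesis using 1 r0 by simp
qed



lemma ZE_add: "f \<in> ZE E \<Longrightarrow> g \<in> ZE E \<Longrightarrow> f + g \<in> ZE E" unfolding ZE_def by simp
lemma ZE_diff: "f \<in> ZE E \<Longrightarrow> g \<in> ZE E \<Longrightarrow> f - g \<in> ZE E" unfolding ZE_def by simp
lemma ZE_eJ: "J \<subseteq> E \<Longrightarrow> eJ J \<in> ZE E" unfolding ZE_def eJ_def by auto

lemma fl_mat: "matroid_flock E d M \<Longrightarrow> \<alpha> \<in> ZE E \<Longrightarrow> matroid E (M \<alpha>)"
  unfolding matroid_flock_def by blast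
lemma fl_rank: "matroid_flock E d M \<Longrightarrow> \<alpha> \<in> ZE E \<Longrightarrow> rk (M \<alpha>) E = d"
  unfolding matroid_flock_def using rk_E by blast
lemma fl_1: "matroid_flock E d M \<Longrightarrow> \<alpha> \<in> ZE E \<Longrightarrow> i \<in> E \<Longrightarrow> mcontract (M \<alpha>) i = mdelete (M (\<alpha> + eJ {i})) i"
  unfolding matroid_flock_def by blast
lemma fl_2: "matroid_flock E d M \<Longrightarrow> \<alpha> \<in> ZE E \<Longrightarrow> M \<alpha> = M (\<alpha> + eJ E)"
  unfolding matroid_flock_def by blast

lemma flock_step: assumes fl: "matroid_flock E d M" and g: "\<gamma> \<in> ZE E" and i: "i \<in> E" and iX: "i \<notin> X"
  shows "rk (M (\<gamma> + eJ {i})) X + rk (M \<gamma>) {i} = rk (M \<gamma>) (insert i X)"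
proof -
  have "rk (M (\<gamma> + eJ {i})) X = rk (mdelete (M (\<gamma> + eJ {i})) i) X" using rk_delete[OF iX] by simp
  also have "\<dots> = rk (mcontract (M \<gamma>) i) X" using fl_1[OF fl g i] by simp
  finally show ?thesis using rk_contract[OF fl_mat[OF fl g] iX] by simp
qed

lemma shift: assumes fl: "matroid_flock E d M" and g: "\<gamma> \<in> ZE E"
  shows "M (\<lambda>x. \<gamma> x + c * eJ E x) = M \<gamma>"
proof (induction c rule: int_induct[where k=0])
  case base then show ?case by simp
next
  case (step1 i)
  have z: "(\<lambda>x. \<gamma> x + i * eJ E x) \<in> ZE E" using g unfolding ZE_def eJ_def by auto
  have "(\<lambda>x. \<gamma> x + (i + 1) * eJ E x) = (\<lambda>x. \<gamma> x + i * eJ E x) + eJ E"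
    by (auto simp: fun_eq_iff algebra_simps)
  then show ?case using fl_2[OF fl z] step1 by simp
next
  case (step2 i)
  have z: "(\<lambda>x. \<gamma> x + (i - 1) * eJ E x) \<in> ZE E" using g unfolding ZE_def eJ_def by auto
  have "(\<lambda>x. \<gamma> x + i * eJ E x) = (\<lambda>x. \<gamma> x + (i - 1) * eJ E x) + eJ E"
    by (auto simp: fun_eq_iff algebra_simps)
  then show ?case using fl_2[OF fl z] step2 by simp
qed

lemma F1: assumes fl: "matroid_flock E d M" and fin: "finite E" and g: "\<gamma> \<in> ZE E" and K: "K \<subseteq> E"
  shows "\<forall>X. X \<inter> K = {} \<longrightarrow> rk (M \<gamma>) (X \<union> K) = rk (M (\<gamma> + eJ K)) X + rk (M \<gamma>) K"
  using finite_subset[OF K fin] K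
proof (induction K rule: finite_induct)
  case empty
  have "\<gamma> + eJ {} = \<gamma>" by (auto simp: fun_eq_iff eJ_def)
  then show ?case using rk_le_card[OF fl_mat[OF fl g], of "{}"] by simp
next
  case (insert i K)
  have gK: "\<gamma> + eJ K \<in> ZE E" using ZE_add[OF g ZE_eJ] insert by simp
  have e: "\<gamma> + eJ (insert i K) = (\<gamma> + eJ K) + eJ {i}" using insert(2) by (auto simp: fun_eq_iff eJ_def)
  show ?case
  proof (intro allI impI)
    fix X assume X: "X \<inter> insert i K = {}"
    have iX: "i \<notin> X" using X by blast
    have s0: "rk (M ((\<gamma> + eJ K) + eJ {i})) X + rk (M (\<gamma> + eJ K)) {i} = rk (M (\<gamma> + eJ K)) (insert i X)"
      using flock_step[OF fl gK _ iX] insert(4) by blast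
    have s: "rk (M (\<gamma> + eJ (insert i K))) X + rk (M (\<gamma> + eJ K)) {i} = rk (M (\<gamma> + eJ K)) (insert i X)"
      using s0 by (simp only: e)
    have d1: "insert i X \<inter> K = {}" "{i} \<inter> K = {}" using X insert(2) by auto
    have h1: "rk (M \<gamma>) (insert i X \<union> K) = rk (M (\<gamma> + eJ K)) (insert i X) + rk (M \<gamma>) K"
      using insert.IH d1(1) insert.prems by blast
    have h2: "rk (M \<gamma>) ({i} \<union> K) = rk (M (\<gamma> + eJ K)) {i} + rk (M \<gamma>) K"
      using insert.IH d1(2) insert.prems by blast
    have "insert i X \<union> K = X \<union> insert i K" "{i} \<union> K = insert i K" by auto
    then show "rk (M \<gamma>) (X \<union> insert i K) = rk (M (\<gamma> + eJ (insert i K))) X + rk (M \<gamma>) (insert i K)"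
      using s h1 h2 by simp
  qed
qed

lemma M1: assumes fl: "matroid_flock E d M" and g: "\<gamma> \<in> ZE E" and i: "i \<in> E" and iA: "i \<notin> A"
  shows "rk (M (\<gamma> + eJ {i})) A \<le> rk (M \<gamma>) A"
  using flock_step[OF fl g i iA] rk_subadd[OF fl_mat[OF fl g], of "{i}" A] by simp

lemma M2: assumes fl: "matroid_flock E d M" and g: "\<gamma> \<in> ZE E" and i: "i \<in> E" and iA: "i \<in> A"
  shows "rk (M \<gamma>) A \<le> rk (M (\<gamma> + eJ {i})) A"
proof -
  have g1: "\<gamma> + eJ {i} \<in> ZE E" using ZE_add[OF g ZE_eJ] i by simp
  have m1: "matroid E (M (\<gamma> + eJ {i}))" using fl_mat[OF fl g1] .
  have s: "rk (M (\<gamma> + eJ {i})) (A - {i}) + rk (M \<gamma>) {i} = rk (M \<gamma>) A"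
    using flock_step[OF fl g i, of "A - {i}"] iA by (simp add: insert_absorb)
  have r1: "rk (M \<gamma>) {i} \<le> 1" using rk_single[OF fl_mat[OF fl g]] .
  show ?thesis
  proof (cases "rk (M \<gamma>) {i} = 0")
    case True
    then show ?thesis using s rk_mono[OF m1, of "A - {i}" A] by auto
  next
    case False
    then have one: "rk (M \<gamma>) {i} = 1" using r1 by simp
    have "rk (M (\<gamma> + eJ {i})) (E - {i}) + rk (M \<gamma>) {i} = rk (M \<gamma>) E"
      using flock_step[OF fl g i, of "E - {i}"] i by (simp add: insert_absorb)
    then have "rk (M (\<gamma> + eJ {i})) (E - {i}) < rk (M (\<gamma> + eJ {i})) E"
      using one fl_rank[OF fl g] fl_rank[OF fl g1] by simp
    then have "rk (M (\<gamma> + eJ {i})) A = Suc (rk (M (\<gamma> + eJ {i})) (A - {i}))"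
      using rk_coloop[OF m1 iA] by simp
    then show ?thesis using s one by simp
  qed
qed

lemma step_decomp: assumes fin: "finite E" and g: "\<gamma> \<in> ZE E" and g': "\<gamma>' \<in> ZE E"
  and le: "\<forall>x. \<gamma> x \<le> \<gamma>' x" and ne: "\<gamma> \<noteq> \<gamma>'"
  shows "\<exists>i\<in>E. \<gamma> i < \<gamma>' i \<and> \<gamma> + eJ {i} \<in> ZE E \<and> (\<forall>x. (\<gamma> + eJ {i}) x \<le> \<gamma>' x)
     \<and> (\<Sum>x\<in>E. nat (\<gamma>' x - (\<gamma> + eJ {i}) x)) < (\<Sum>x\<in>E. nat (\<gamma>' x - \<gamma> x))"
proof -
  obtain i where ne': "\<gamma> i \<noteq> \<gamma>' i" using ne by blast
  have i1: "i \<in> E" using ne' g g' unfolding ZE_def by (cases "i \<in> E") auto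
  have "\<gamma> i \<le> \<gamma>' i" using le by blast
  then have i: "i \<in> E" "\<gamma> i < \<gamma>' i" using i1 ne' by auto
  have "\<gamma> + eJ {i} \<in> ZE E" using ZE_add[OF g ZE_eJ] i by simp
  moreover have "\<forall>x. (\<gamma> + eJ {i}) x \<le> \<gamma>' x" using le i by (auto simp: eJ_def)
  moreover have "(\<Sum>x\<in>E. nat (\<gamma>' x - (\<gamma> + eJ {i}) x)) < (\<Sum>x\<in>E. nat (\<gamma>' x - \<gamma> x))"
    using fin i by (intro sum_strict_mono_ex1) (auto simp: eJ_def)
  ultimately show ?thesis using i by blast
qed

lemma mono1: assumes fl: "matroid_flock E d M" and fin: "finite E"
  shows "\<forall>\<gamma>. \<gamma> \<in> ZE E \<longrightarrow> \<gamma>' \<in> ZE E \<longrightarrow> (\<forall>x. \<gamma> x \<le> \<gamma>' x) \<longrightarrow> (\<forall>x\<in>A. \<gamma> x = \<gamma>' x)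
     \<longrightarrow> (\<Sum>x\<in>E. nat (\<gamma>' x - \<gamma> x)) = n \<longrightarrow> rk (M \<gamma>') A \<le> rk (M \<gamma>) A"
proof (induction n rule: less_induct)
  case (less n)
  show ?case
  proof (intro allI impI)
    fix \<gamma> assume g: "\<gamma> \<in> ZE E" and g': "\<gamma>' \<in> ZE E" and le: "\<forall>x. \<gamma> x \<le> \<gamma>' x"
      and eq: "\<forall>x\<in>A. \<gamma> x = \<gamma>' x" and n: "(\<Sum>x\<in>E. nat (\<gamma>' x - \<gamma> x)) = n"
    show "rk (M \<gamma>') A \<le> rk (M \<gamma>) A"
    proof (cases "\<gamma> = \<gamma>'")
      case True then show ?thesis by simp
    next
      case False
      then obtain i where i: "i \<in> E" "\<gamma> i < \<gamma>' i" "\<gamma> + eJ {i} \<in> ZE E" "\<forall>x. (\<gamma> + eJ {i}) x \<le> \<gamma>' x"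
        "(\<Sum>x\<in>E. nat (\<gamma>' x - (\<gamma> + eJ {i}) x)) < n"
        using step_decomp[OF fin g g' le] n by blast
      have iA: "i \<notin> A" using eq i by force
      have "\<forall>x\<in>A. (\<gamma> + eJ {i}) x = \<gamma>' x" using eq iA by (auto simp: eJ_def)
      then have "rk (M \<gamma>') A \<le> rk (M (\<gamma> + eJ {i})) A" using less i g' by blast
      then show ?thesis using M1[OF fl g i(1) iA] by simp
    qed
  qed
qed

lemma mono2: assumes fl: "matroid_flock E d M" and fin: "finite E"
  shows "\<forall>\<gamma>. \<gamma> \<in> ZE E \<longrightarrow> \<gamma>' \<in> ZE E \<longrightarrow> (\<forall>x. \<gamma> x \<le> \<gamma>' x) \<longrightarrow> (\<forall>x. x \<notin> A \<longrightarrow> \<gamma> x = \<gamma>' x)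
     \<longrightarrow> (\<Sum>x\<in>E. nat (\<gamma>' x - \<gamma> x)) = n \<longrightarrow> rk (M \<gamma>) A \<le> rk (M \<gamma>') A"
proof (induction n rule: less_induct)
  case (less n)
  show ?case
  proof (intro allI impI)
    fix \<gamma> assume g: "\<gamma> \<in> ZE E" and g': "\<gamma>' \<in> ZE E" and le: "\<forall>x. \<gamma> x \<le> \<gamma>' x"
      and eq: "\<forall>x. x \<notin> A \<longrightarrow> \<gamma> x = \<gamma>' x" and n: "(\<Sum>x\<in>E. nat (\<gamma>' x - \<gamma> x)) = n"
    show "rk (M \<gamma>) A \<le> rk (M \<gamma>') A"
    proof (cases "\<gamma> = \<gamma>'")
      case True then show ?thesis by simp
    next
      case False
      then obtain i where i: "i \<in> E" "\<gamma> i < \<gamma>' i" "\<gamma> + eJ {i} \<in> ZE E" "\<forall>x. (\<gamma> + eJ {i}) x \<le> \<gamma>' x"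
        "(\<Sum>x\<in>E. nat (\<gamma>' x - (\<gamma> + eJ {i}) x)) < n"
        using step_decomp[OF fin g g' le] n by blast
      have iA: "i \<in> A" using eq i by force
      have "\<forall>x. x \<notin> A \<longrightarrow> (\<gamma> + eJ {i}) x = \<gamma>' x" using eq iA by (auto simp: eJ_def)
      then have "rk (M (\<gamma> + eJ {i})) A \<le> rk (M \<gamma>') A" using less i g' by blast
      then show ?thesis using M2[OF fl g i(1) iA] by simp
    qed
  qed
qed


lemma key: assumes fl: "matroid_flock E d M" and fin: "finite E" and a: "\<alpha> \<in> ZE E"
  and b: "\<beta> \<in> ZE E" and eqM: "M \<alpha> = M \<beta>" and J: "J \<subseteq> E"
  and hJ: "\<forall>x\<in>J. \<beta> x - \<alpha> x = m" and hK: "\<forall>x\<in>E - J. \<beta> x - \<alpha> x \<le> m - 1"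
  shows "M (\<alpha> + eJ J) = M \<alpha>"
proof -
  define K where "K = E - J"
  have KE: "K \<subseteq> E" unfolding K_def by blast
  have P: "\<alpha> + eJ J \<in> ZE E" using ZE_add[OF a ZE_eJ[OF J]] .
  define b' where "b' = (\<lambda>x. \<beta> x + (1 - m) * eJ E x)"
  have Mb': "M b' = M \<alpha>" using shift[OF fl b] eqM unfolding b'_def by simp
  have b': "b' \<in> ZE E" using b unfolding b'_def ZE_def eJ_def by auto
  have za: "\<forall>x. x \<notin> E \<longrightarrow> \<alpha> x = 0" and zb: "\<forall>x. x \<notin> E \<longrightarrow> \<beta> x = 0" using a b unfolding ZE_def by auto
  have le: "\<forall>x. b' x \<le> (\<alpha> + eJ J) x"
  proof
    fix x show "b' x \<le> (\<alpha> + eJ J) x"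
      using hJ hK za zb J unfolding b'_def eJ_def by (cases "x \<in> J"; cases "x \<in> E") (auto simp: algebra_simps)
  qed
  have eqJ: "\<forall>x\<in>J. b' x = (\<alpha> + eJ J) x"
    using hJ J unfolding b'_def eJ_def by (auto simp: algebra_simps)
  have eqO: "\<forall>x. x \<notin> K \<longrightarrow> b' x = (\<alpha> + eJ J) x"
  proof (intro allI impI)
    fix x assume "x \<notin> K"
    then have "x \<in> J \<or> x \<notin> E" unfolding K_def by blast
    then show "b' x = (\<alpha> + eJ J) x" using eqJ za zb J unfolding b'_def eJ_def by auto
  qed
  have mo1: "rk (M (\<alpha> + eJ J)) J \<le> rk (M b') J"
    using mono1[OF fl fin, of "\<alpha> + eJ J" J] b' P le eqJ by blast
  have mo2: "rk (M b') K \<le> rk (M (\<alpha> + eJ J)) K"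
    using mono2[OF fl fin, of "\<alpha> + eJ J" K] b' P le eqO by blast
  have mN: "matroid E (M \<alpha>)" using fl_mat[OF fl a] .
  have mP: "matroid E (M (\<alpha> + eJ J))" using fl_mat[OF fl P] .
  have rN: "rk (M \<alpha>) E = d" using fl_rank[OF fl a] .
  have rP: "rk (M (\<alpha> + eJ J)) E = d" using fl_rank[OF fl P] .
  have F1a: "\<forall>X. X \<inter> J = {} \<longrightarrow> rk (M \<alpha>) (X \<union> J) = rk (M (\<alpha> + eJ J)) X + rk (M \<alpha>) J"
    using F1[OF fl fin a J] .
  have "K \<union> J = E" unfolding K_def using J by blast
  moreover have "rk (M \<alpha>) (K \<union> J) = rk (M (\<alpha> + eJ J)) K + rk (M \<alpha>) J"
    using F1a unfolding K_def by blast
  ultimately have e1: "d = rk (M (\<alpha> + eJ J)) K + rk (M \<alpha>) J" using rN by simp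
  have sepN: "rk (M \<alpha>) J + rk (M \<alpha>) (E - J) \<le> rk (M \<alpha>) E"
    using e1 mo2 Mb' rN unfolding K_def by simp
  have sepP: "rk (M (\<alpha> + eJ J)) J + rk (M (\<alpha> + eJ J)) (E - J) \<le> rk (M (\<alpha> + eJ J)) E"
    using e1 mo1 Mb' rP unfolding K_def by simp
  define a2 where "a2 = \<alpha> - eJ K"
  have a2: "a2 \<in> ZE E" unfolding a2_def using ZE_diff[OF a ZE_eJ[OF KE]] .
  have a2K: "a2 + eJ K = \<alpha>" unfolding a2_def by (simp add: fun_eq_iff)
  have "a2 + eJ E = \<alpha> + eJ J" unfolding a2_def K_def eJ_def using J by (auto simp: fun_eq_iff)
  then have Ma2: "M a2 = M (\<alpha> + eJ J)" using fl_2[OF fl a2] by simp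
  have F1b: "\<forall>X. X \<inter> K = {} \<longrightarrow> rk (M (\<alpha> + eJ J)) (X \<union> K) = rk (M \<alpha>) X + rk (M (\<alpha> + eJ J)) K"
    using F1[OF fl fin a2 KE] a2K Ma2 by simp
  show ?thesis
  proof (rule rk_eq_by[OF mP mN])
    fix X assume XE: "X \<subseteq> E"
    define X1 where "X1 = X \<inter> J"
    define X2 where "X2 = X - J"
    have X1: "X1 \<subseteq> J" and X2: "X2 \<subseteq> E - J" unfolding X1_def X2_def using XE by auto
    have XX: "X = X1 \<union> X2" unfolding X1_def X2_def by blast
    have n1: "rk (M \<alpha>) X = rk (M \<alpha>) X1 + rk (M \<alpha>) X2" using rk_sep[OF mN J sepN X1 X2] XX by simp
    have p1: "rk (M (\<alpha> + eJ J)) X = rk (M (\<alpha> + eJ J)) X1 + rk (M (\<alpha> + eJ J)) X2"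
      using rk_sep[OF mP J sepP X1 X2] XX by simp
    have "X2 \<inter> J = {}" using X2 by blast
    then have "rk (M \<alpha>) (X2 \<union> J) = rk (M (\<alpha> + eJ J)) X2 + rk (M \<alpha>) J" using F1a by blast
    moreover have "rk (M \<alpha>) (J \<union> X2) = rk (M \<alpha>) J + rk (M \<alpha>) X2" using rk_sep[OF mN J sepN _ X2] by blast
    ultimately have q2: "rk (M (\<alpha> + eJ J)) X2 = rk (M \<alpha>) X2" by (simp add: Un_commute)
    have "X1 \<inter> K = {}" using X1 unfolding K_def by blast
    then have "rk (M (\<alpha> + eJ J)) (X1 \<union> K) = rk (M \<alpha>) X1 + rk (M (\<alpha> + eJ J)) K" using F1b by blast
    moreover have "rk (M (\<alpha> + eJ J)) (X1 \<union> K) = rk (M (\<alpha> + eJ J)) X1 + rk (M (\<alpha> + eJ J)) K"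
      using rk_sep[OF mP J sepP X1] unfolding K_def by blast
    ultimately have q1: "rk (M (\<alpha> + eJ J)) X1 = rk (M \<alpha>) X1" by simp
    show "rk (M (\<alpha> + eJ J)) X = rk (M \<alpha>) X" using n1 p1 q1 q2 by simp
  qed
qed

definition walk :: "(('a \<Rightarrow> int) \<Rightarrow> 'b) \<Rightarrow> 'a set \<Rightarrow> ('a \<Rightarrow> int) \<Rightarrow> ('a \<Rightarrow> int) \<Rightarrow> bool" where
  "walk M E a b \<longleftrightarrow> (\<exists>(k::nat) (\<gamma>::nat \<Rightarrow> 'a \<Rightarrow> int). \<gamma> 0 = a \<and> \<gamma> k = b
     \<and> (\<forall>i\<le>k. \<gamma> i \<in> ZE E \<and> M (\<gamma> i) = M a)
     \<and> (\<forall>i\<in>{1..k}. \<exists>J\<subseteq>E. \<gamma> i - \<gamma> (i - 1) = eJ J \<or> \<gamma> i - \<gamma> (i - 1) = - eJ J))"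

lemma walk_refl: "a \<in> ZE E \<Longrightarrow> walk M E a a"
  unfolding walk_def by (rule exI[of _ 0], rule exI[of _ "\<lambda>_. a"]) auto

lemma walk_prep: assumes a: "a \<in> ZE E" and eq: "M a = M a'" and J: "J \<subseteq> E"
  and st: "a' - a = eJ J \<or> a' - a = - eJ J" and w: "walk M E a' b"
  shows "walk M E a b"
proof -
  obtain k :: nat and \<gamma> :: "nat \<Rightarrow> 'a \<Rightarrow> int" where g: "\<gamma> 0 = a'" "\<gamma> k = b" "\<forall>i\<le>k. \<gamma> i \<in> ZE E \<and> M (\<gamma> i) = M a'"
    "\<forall>i\<in>{1..k}. \<exists>J\<subseteq>E. \<gamma> i - \<gamma> (i - 1) = eJ J \<or> \<gamma> i - \<gamma> (i - 1) = - eJ J"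
    using w unfolding walk_def by blast
  define \<gamma>' where "\<gamma>' = (\<lambda>i. if i = 0 then a else \<gamma> (i - 1))"
  have 1: "\<forall>i\<le>Suc k. \<gamma>' i \<in> ZE E \<and> M (\<gamma>' i) = M a"
  proof (intro allI impI)
    fix i assume "i \<le> Suc k"
    then show "\<gamma>' i \<in> ZE E \<and> M (\<gamma>' i) = M a" using g(3) a eq unfolding \<gamma>'_def
      by (cases i) auto
  qed
  have 2: "\<forall>i\<in>{1..Suc k}. \<exists>J\<subseteq>E. \<gamma>' i - \<gamma>' (i - 1) = eJ J \<or> \<gamma>' i - \<gamma>' (i - 1) = - eJ J"
  proof
    fix i assume i: "i \<in> {1..Suc k}"
    show "\<exists>J\<subseteq>E. \<gamma>' i - \<gamma>' (i - 1) = eJ J \<or> \<gamma>' i - \<gamma>' (i - 1) = - eJ J"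
    proof (cases "i = 1")
      case True then show ?thesis using st J g(1) unfolding \<gamma>'_def by auto
    next
      case False
      then have mem: "i - 1 \<in> {1..k}" using i by auto
      have eqs: "\<gamma>' i = \<gamma> (i - 1)" "\<gamma>' (i - 1) = \<gamma> (i - 1 - 1)" using i False unfolding \<gamma>'_def by auto
      obtain J' where J': "J' \<subseteq> E" "\<gamma> (i - 1) - \<gamma> (i - 1 - 1) = eJ J' \<or> \<gamma> (i - 1) - \<gamma> (i - 1 - 1) = - eJ J'"
        using g(4) mem by blast
      show ?thesis unfolding eqs using J' by blast
    qed
  qed
  show ?thesis unfolding walk_def
    by (rule exI[of _ "Suc k"], rule exI[of _ \<gamma>']) (use 1 2 g(2) in \<open>auto simp: \<gamma>'_def\<close>)
qed

lemma phaseA: assumes fl: "matroid_flock E d M" and fin: "finite E" and b: "\<beta> \<in> ZE E"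
  shows "\<forall>\<gamma>. (\<Sum>x\<in>E. nat (\<beta> x - \<gamma> x)) = n \<longrightarrow> \<gamma> \<in> ZE E \<longrightarrow> M \<gamma> = M \<beta> \<longrightarrow> (\<forall>x. \<gamma> x \<le> \<beta> x) \<longrightarrow> walk M E \<gamma> \<beta>"
proof (induction n rule: less_induct)
  case (less n)
  show ?case
  proof (intro allI impI)
    fix \<gamma> assume n: "(\<Sum>x\<in>E. nat (\<beta> x - \<gamma> x)) = n" and g: "\<gamma> \<in> ZE E" and eq: "M \<gamma> = M \<beta>"
      and le: "\<forall>x. \<gamma> x \<le> \<beta> x"
    show "walk M E \<gamma> \<beta>"
    proof (cases "\<gamma> = \<beta>")
      case True then show ?thesis using walk_refl[OF g] by simp
    next
      case False
      then obtain x0 where ne': "\<gamma> x0 \<noteq> \<beta> x0" by blast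
      have x1: "x0 \<in> E" using ne' g b unfolding ZE_def by (cases "x0 \<in> E") auto
      have "\<gamma> x0 \<le> \<beta> x0" using le by blast
      then have x0: "x0 \<in> E" "\<gamma> x0 < \<beta> x0" using x1 ne' by auto
      define D where "D = (\<lambda>x. \<beta> x - \<gamma> x)"
      define m where "m = Max (D ` E)"
      have fD: "finite (D ` E)" using fin by simp
      have mge: "\<forall>x\<in>E. D x \<le> m" unfolding m_def using fD by auto
      have m0: "m \<ge> 1" using mge x0 unfolding D_def by force
      have "m \<in> D ` E" unfolding m_def using fD x0 by (intro Max_in) auto
      then obtain j where j: "j \<in> E" "D j = m" by blast
      define J where "J = {x \<in> E. D x = m}"
      have JE: "J \<subseteq> E" unfolding J_def by blast
      have jJ: "j \<in> J" using j unfolding J_def by blast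
      have hJ: "\<forall>x\<in>J. \<beta> x - \<gamma> x = m" unfolding J_def D_def by auto
      have hK: "\<forall>x\<in>E - J. \<beta> x - \<gamma> x \<le> m - 1" using mge unfolding J_def D_def by force
      have Mg': "M (\<gamma> + eJ J) = M \<gamma>" using key[OF fl fin g b eq JE hJ hK] .
      have g': "\<gamma> + eJ J \<in> ZE E" using ZE_add[OF g ZE_eJ[OF JE]] .
      have le': "\<forall>x. (\<gamma> + eJ J) x \<le> \<beta> x" using le hJ m0 unfolding eJ_def by force
      have "(\<Sum>x\<in>E. nat (\<beta> x - (\<gamma> + eJ J) x)) < (\<Sum>x\<in>E. nat (\<beta> x - \<gamma> x))"
      proof (rule sum_strict_mono_ex1[OF fin])
        show "\<forall>x\<in>E. nat (\<beta> x - (\<gamma> + eJ J) x) \<le> nat (\<beta> x - \<gamma> x)" unfolding eJ_def by auto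
        show "\<exists>x\<in>E. nat (\<beta> x - (\<gamma> + eJ J) x) < nat (\<beta> x - \<gamma> x)"
          using j jJ hJ m0 unfolding eJ_def by (intro bexI[of _ j]) auto
      qed
      then have lt: "(\<Sum>x\<in>E. nat (\<beta> x - (\<gamma> + eJ J) x)) < n" using n by simp
      have MM: "M (\<gamma> + eJ J) = M \<beta>" using Mg' eq by simp
      have "walk M E (\<gamma> + eJ J) \<beta>" using less.IH[OF lt, rule_format, of "\<gamma> + eJ J"] g' MM le' by blast
      moreover have "(\<gamma> + eJ J) - \<gamma> = eJ J" by (simp add: fun_eq_iff)
      ultimately show ?thesis using walk_prep[OF g _ JE] Mg' by metis
    qed
  qed
qed

lemma phaseC: assumes fl: "matroid_flock E d M" and fin: "finite E" and b: "\<beta> \<in> ZE E"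
  shows "\<forall>\<gamma>. \<gamma> \<in> ZE E \<longrightarrow> M \<gamma> = M \<beta> \<longrightarrow> (\<forall>x\<in>E. \<gamma> x - int n \<le> \<beta> x) \<longrightarrow> walk M E \<gamma> \<beta>"
proof (induction n)
  case 0
  show ?case
  proof (intro allI impI)
    fix \<gamma> assume g: "\<gamma> \<in> ZE E" and eq: "M \<gamma> = M \<beta>" and le: "\<forall>x\<in>E. \<gamma> x - int 0 \<le> \<beta> x"
    have "\<forall>x. \<gamma> x \<le> \<beta> x"
    proof
      fix x show "\<gamma> x \<le> \<beta> x"
      proof (cases "x \<in> E")
        case True then show ?thesis using le by simp
      next
        case False then show ?thesis using g b unfolding ZE_def by simp
      qed
    qed
    then show "walk M E \<gamma> \<beta>" using phaseA[OF fl fin b] g eq by blast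
  qed
next
  case (Suc n)
  show ?case
  proof (intro allI impI)
    fix \<gamma> assume g: "\<gamma> \<in> ZE E" and eq: "M \<gamma> = M \<beta>" and le: "\<forall>x\<in>E. \<gamma> x - int (Suc n) \<le> \<beta> x"
    define g1 where "g1 = \<gamma> - eJ E"
    have g1: "g1 \<in> ZE E" unfolding g1_def using ZE_diff[OF g ZE_eJ] by simp
    have "g1 + eJ E = \<gamma>" unfolding g1_def by (simp add: fun_eq_iff)
    then have Mg1: "M g1 = M \<gamma>" using fl_2[OF fl g1] by simp
    have "\<forall>x\<in>E. g1 x - int n \<le> \<beta> x" using le unfolding g1_def eJ_def by auto
    then have "walk M E g1 \<beta>" using Suc g1 Mg1 eq by auto
    moreover have "g1 - \<gamma> = - eJ E" unfolding g1_def by (simp add: fun_eq_iff)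
    ultimately show "walk M E \<gamma> \<beta>" using walk_prep[OF g _ order_refl] Mg1 by metis
  qed
qed

theorem mainTheorem16:
  fixes E :: "'a set" and d :: nat and M :: "('a \<Rightarrow> int) \<Rightarrow> 'a set set"
    and \<alpha> \<beta> :: "'a \<Rightarrow> int"
  assumes "finite E" and "matroid_flock E d M"
    and "\<alpha> \<in> ZE E" and "\<beta> \<in> ZE E" and "M \<alpha> = M \<beta>"
  shows "\<exists>(k::nat) (\<gamma>::nat \<Rightarrow> 'a \<Rightarrow> int). \<gamma> 0 = \<alpha> \<and> \<gamma> k = \<beta>
     \<and> (\<forall>i\<le>k. \<gamma> i \<in> ZE E \<and> M (\<gamma> i) = M \<alpha>)
     \<and> (\<forall>i\<in>{1..k}. \<exists>J\<subseteq>E. \<gamma> i - \<gamma> (i - 1) = eJ J \<or> \<gamma> i - \<gamma> (i - 1) = - eJ J)"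
proof -
  define n where "n = (\<Sum>x\<in>E. nat (\<alpha> x - \<beta> x))"
  have "\<forall>x\<in>E. \<alpha> x - int n \<le> \<beta> x"
  proof
    fix x assume x: "x \<in> E"
    have "nat (\<alpha> x - \<beta> x) \<le> n" unfolding n_def using x assms(1) by (intro member_le_sum) auto
    then show "\<alpha> x - int n \<le> \<beta> x" by linarith
  qed
  then have "walk M E \<alpha> \<beta>" using phaseC[OF assms(2,1,4)] assms(3,5) by blast
  then show ?thesis unfolding walk_def .
qed

end
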